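(* Let $(X,T)$ be a compact Hausdorff flow in which every point of $X$ is almost automorphic. Then $(X,T)$ is distal, the enveloping semigroup $\mathcal E(X,T)$ is a group, and whenever $\{t_i\}_{i\in I}\subset T$ is a net with $t_i\to g\in\mathcal E(X,T)$ (in the product topology of $X^X$), the net $\{t_i^{-1}\}_{i\in I}$ converges to $g^{-1}\in\mathcal E(X,T)$.
   Context: $X$ compact Hausdorff, $T$ a topological group acting continuously on $X$. A point $x$ is almost automorphic if for every net $\{t_i\}\subset T$ with $t_ix\to y$ it holds that $t_i^{-1}y\to x$. Two points $x,y$ are proximal if there are a net $\{t_i\}\subset T$ and $z\in X$ with $t_ix\to z$ and $t_iy\to z$; the flow is distal if no two distinct points are proximal. The enveloping semigroup $\mathcal E(X,T)$ is the closure of (the maps given by) $T$ in $X^X$ with the product (pointwise convergence) topology, with composition as semigroup operation. *)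

theory Defs
  imports "HOL-Analysis.Analysis"
begin

definition flow :: "('g::topological_group_add \<Rightarrow> 'x::topological_space \<Rightarrow> 'x) \<Rightarrow> bool" where
  "flow act \<longleftrightarrow> (\<forall>x. act 0 x = x) \<and> (\<forall>s t x. act (s + t) x = act s (act t x))
     \<and> continuous_on UNIV (\<lambda>(t, x). act t x)"

text \<open>Nets in T are represented by filters on T (the image filter of the net).\<close>
definition almost_automorphic :: "('g::group_add \<Rightarrow> 'x::topological_space \<Rightarrow> 'x) \<Rightarrow> 'x \<Rightarrow> bool" where
  "almost_automorphic act x \<longleftrightarrow>
     (\<forall>(F::'g filter) y. ((\<lambda>t. act t x) \<longlongrightarrow> y) F \<longrightarrow> ((\<lambda>t. act (- t) y) \<longlongrightarrow> x) F)"

definition proximal :: "('g \<Rightarrow> 'x::topological_space \<Rightarrow> 'x) \<Rightarrow> 'x \<Rightarrow> 'x \<Rightarrow> bool" where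
  "proximal act x y \<longleftrightarrow> (\<exists>(F::'g filter) z. F \<noteq> bot \<and>
     ((\<lambda>t. act t x) \<longlongrightarrow> z) F \<and> ((\<lambda>t. act t y) \<longlongrightarrow> z) F)"

definition distal :: "('g \<Rightarrow> 'x::topological_space \<Rightarrow> 'x) \<Rightarrow> bool" where
  "distal act \<longleftrightarrow> (\<forall>x y. proximal act x y \<longrightarrow> x = y)"

definition enveloping :: "('g \<Rightarrow> 'x \<Rightarrow> 'x::topological_space) \<Rightarrow> ('x \<Rightarrow> 'x) set" where
  "enveloping act = closure (range act)"

definition is_comp_group :: "('x \<Rightarrow> 'x) set \<Rightarrow> bool" where
  "is_comp_group E \<longleftrightarrow> id \<in> E \<and> (\<forall>f\<in>E. \<forall>g\<in>E. f \<circ> g \<in> E)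
     \<and> (\<forall>f\<in>E. \<exists>g\<in>E. f \<circ> g = id \<and> g \<circ> f = id)"

end

theory Submission imports Defs begin
lemma tendsto_fun_iff:
  fixes f :: "'a \<Rightarrow> 'b \<Rightarrow> 'c::topological_space"
  shows "(f \<longlongrightarrow> g) F \<longleftrightarrow> (\<forall>x. ((\<lambda>t. f t x) \<longlongrightarrow> g x) F)"
  using limitin_componentwise[of "\<lambda>i. euclidean" UNIV f g F]
  by (simp add: euclidean_product_topology)

lemma flow_cont:
  fixes act :: "'g::topological_group_add \<Rightarrow> 'x::topological_space \<Rightarrow> 'x"
  assumes "flow act" shows "continuous_on UNIV (act s)"
proof -
  have c: "continuous_on UNIV (\<lambda>(t, x). act t x)" using assms by (simp add: flow_def)
  have "continuous_on UNIV ((\<lambda>(t, x). act t x) \<circ> (\<lambda>x. (s,x)))"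
    by (rule continuous_on_compose) (auto intro!: continuous_intros continuous_on_subset[OF c])
  then show ?thesis by (simp add: o_def)
qed

lemma env_filter:
  assumes "g \<in> enveloping act"
  shows "\<exists>F. F \<noteq> bot \<and> (act \<longlongrightarrow> g) F"
proof (intro exI conjI)
  show "filtercomap act (nhds g) \<noteq> bot"
  proof (rule filtercomap_neq_bot)
    fix P assume "eventually P (nhds g)"
    then obtain S where S: "open S" "g \<in> S" "\<forall>x\<in>S. P x" by (auto simp: eventually_nhds)
    with assms obtain y where "y \<in> range act" "y \<in> S"
      unfolding enveloping_def by (meson closure_iff_nhds_not_empty order_refl disjoint_iff)
    with S show "\<exists>x. P (act x)" by auto
  qed
  show "(act \<longlongrightarrow> g) (filtercomap act (nhds g))" by (rule filterlim_filtercomap)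
qed
lemma inf_comap_ne_bot:
  assumes "inf H (filtermap f F) \<noteq> bot"
  shows "inf F (filtercomap f H) \<noteq> bot"
proof
  assume "inf F (filtercomap f H) = bot"
  then have "eventually (\<lambda>_. False) (inf F (filtercomap f H))" by simp
  then obtain Q R where Q: "eventually Q F" and R: "eventually R (filtercomap f H)"
    and QR: "\<forall>t. Q t \<and> R t \<longrightarrow> False"
    unfolding eventually_inf by blast
  from R obtain R' where R': "eventually R' H" "\<forall>t. R' (f t) \<longrightarrow> R t"
    unfolding eventually_filtercomap by blast
  have "eventually (\<lambda>z. \<not> R' z) (filtermap f F)"
    unfolding eventually_filtermap using Q by (rule eventually_mono) (use QR R'(2) in blast)
  with R'(1) have "eventually (\<lambda>_. False) (inf H (filtermap f F))"
    unfolding eventually_inf by blast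
  with assms show False by simp
qed

theorem mainTheorem2:
  fixes act :: "'g::topological_group_add \<Rightarrow> 'x::t2_space \<Rightarrow> 'x"
  assumes "compact (UNIV :: 'x set)"
    and "flow act"
    and "\<forall>x. almost_automorphic act x"
  shows "distal act \<and> is_comp_group (enveloping act) \<and>
    (\<forall>(F::'g filter) g. g \<in> enveloping act \<and> (act \<longlongrightarrow> g) F \<longrightarrow>
        inv g \<in> enveloping act \<and> g \<circ> inv g = id \<and> inv g \<circ> g = id \<and>
        ((\<lambda>t. act (- t)) \<longlongrightarrow> inv g) F)"
proof -
  have cont: "\<And>s. continuous_on UNIV (act s)" using flow_cont[OF assms(2)] .
  have flow_add: "\<And>s t x. act (s + t) x = act s (act t x)" and flow0: "\<And>x. act 0 x = x"
    using assms(2) unfolding flow_def by simp_all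
  have AA: "\<And>x (F::'g filter) y. ((\<lambda>t. act t x) \<longlongrightarrow> y) F \<Longrightarrow> ((\<lambda>t. act (- t) y) \<longlongrightarrow> x) F"
    using assms(3) unfolding almost_automorphic_def by simp
  have clE: "closed (enveloping act)" by (simp add: enveloping_def)
  have rE: "act t \<in> enveloping act" for t unfolding enveloping_def
    using closure_subset by (rule subsetD) simp
  have distal: "distal act"
    unfolding distal_def proximal_def
  proof (intro allI impI)
    fix x y assume "\<exists>(F::'g filter) z. F \<noteq> bot \<and> ((\<lambda>t. act t x) \<longlongrightarrow> z) F \<and> ((\<lambda>t. act t y) \<longlongrightarrow> z) F"
    then obtain F :: "'g filter" and z where F: "F \<noteq> bot" "((\<lambda>t. act t x) \<longlongrightarrow> z) F"
      "((\<lambda>t. act t y) \<longlongrightarrow> z) F" by blast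
    show "x = y" by (rule tendsto_unique[OF F(1) AA[OF F(2)] AA[OF F(3)]])
  qed
  have bij: "bij g" if g: "g \<in> enveloping act" for g
  proof -
    obtain F :: "'g filter" where F: "F \<noteq> bot" "(act \<longlongrightarrow> g) F" using env_filter[OF g] by blast
    have pw: "\<And>x. ((\<lambda>t. act t x) \<longlongrightarrow> g x) F" using F(2) by (simp add: tendsto_fun_iff)
    have "inj g"
    proof (rule injI)
      fix x y assume "g x = g y"
      then have "proximal act x y" unfolding proximal_def using F(1) pw[of x] pw[of y] by (intro exI[of _ F] exI[of _ "g x"]) simp
      with distal show "x = y" by (simp add: distal_def)
    qed
    moreover have "surj g"
    proof -
      { fix y
        define F' where "F' = filtermap (\<lambda>t. act (- t) y) F"
        have "F' \<noteq> bot" using F(1) by (simp add: F'_def filtermap_bot_iff)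
        then have "\<exists>x. inf (nhds x) F' \<noteq> bot"
          using assms(1)[unfolded compact_filter, rule_format, OF \<open>F' \<noteq> bot\<close>] by (simp add: eventually_True)
        then obtain x :: 'x where x: "inf (nhds x) F' \<noteq> bot" by blast
        define G where "G = inf F (filtercomap (\<lambda>t. act (- t) y) (nhds x))"
        have Gne: "G \<noteq> bot" unfolding G_def by (rule inf_comap_ne_bot) (use x F'_def in simp)
        have G1: "((\<lambda>t. act (- t) y) \<longlongrightarrow> x) G" unfolding G_def
          by (rule filterlim_mono[OF filterlim_filtercomap]) auto
        have G2: "((\<lambda>t. act t x) \<longlongrightarrow> g x) G" unfolding G_def
          by (rule filterlim_mono[OF pw]) auto
        have "((\<lambda>s. act s y) \<longlongrightarrow> x) (filtermap uminus G)" using G1 by (simp add: filterlim_filtermap)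
        from AA[OF this] have G3: "((\<lambda>t. act t x) \<longlongrightarrow> y) G" by (simp add: filterlim_filtermap)
        have "g x = y" by (rule tendsto_unique[OF Gne G2 G3])
        hence "y \<in> range g" by auto }
      thus ?thesis by auto
    qed
    ultimately show ?thesis by (simp add: bij_def)
  qed
  have conv: "((\<lambda>t. act (- t)) \<longlongrightarrow> inv g) F" if "bij g" "(act \<longlongrightarrow> g) F" for g and F :: "'g filter"
  proof -
    have pw: "\<And>x. ((\<lambda>t. act t x) \<longlongrightarrow> g x) F" using that(2) by (simp add: tendsto_fun_iff)
    have "((\<lambda>t. act (- t) x) \<longlongrightarrow> inv g x) F" for x
      using AA[OF pw[of "inv g x"]] that(1) by (simp add: bij_is_surj surj_f_inv_f)
    then show ?thesis by (simp add: tendsto_fun_iff)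
  qed
  have invE: "inv g \<in> enveloping act" if g: "g \<in> enveloping act" for g
  proof -
    obtain F :: "'g filter" where F: "F \<noteq> bot" "(act \<longlongrightarrow> g) F" using env_filter[OF g] by blast
    show ?thesis by (rule Lim_in_closed_set[OF clE _ F(1) conv[OF bij[OF g] F(2)]]) (simp add: rE)
  qed
  have leftE: "act s \<circ> g \<in> enveloping act" if g: "g \<in> enveloping act" for g s
  proof -
    obtain F :: "'g filter" where F: "F \<noteq> bot" "(act \<longlongrightarrow> g) F" using env_filter[OF g] by blast
    have pw: "\<And>x. ((\<lambda>t. act t x) \<longlongrightarrow> g x) F" using F(2) by (simp add: tendsto_fun_iff)
    have "((\<lambda>t. act (s + t) x) \<longlongrightarrow> (act s \<circ> g) x) F" for x
      unfolding flow_add o_def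
      by (rule isCont_tendsto_compose[OF _ pw]) (use cont[of s] in \<open>simp add: continuous_on_eq_continuous_at\<close>)
    then have L: "((\<lambda>t. act (s + t)) \<longlongrightarrow> act s \<circ> g) F" by (simp add: tendsto_fun_iff)
    show ?thesis by (rule Lim_in_closed_set[OF clE _ F(1) L]) (simp add: rE)
  qed
  have compE: "f \<circ> g \<in> enveloping act" if f: "f \<in> enveloping act" and g: "g \<in> enveloping act" for f g
  proof -
    obtain F :: "'g filter" where F: "F \<noteq> bot" "(act \<longlongrightarrow> f) F" using env_filter[OF f] by blast
    have pw: "\<And>x. ((\<lambda>t. act t x) \<longlongrightarrow> f x) F" using F(2) by (simp add: tendsto_fun_iff)
    have L: "((\<lambda>t. act t \<circ> g) \<longlongrightarrow> f \<circ> g) F" using pw tendsto_fun_iff[of "\<lambda>t. act t \<circ> g"] by simp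
    show ?thesis by (rule Lim_in_closed_set[OF clE _ F(1) L]) (simp add: leftE[OF g])
  qed
  have idE: "id \<in> enveloping act"
  proof -
    have "act 0 = id" by (rule ext) (simp add: flow0)
    then show ?thesis using rE[of 0] by simp
  qed
  have grp: "is_comp_group (enveloping act)"
    unfolding is_comp_group_def
  proof (intro conjI ballI)
    show "id \<in> enveloping act" by (rule idE)
  next
    fix f g assume "f \<in> enveloping act" "g \<in> enveloping act"
    then show "f \<circ> g \<in> enveloping act" by (rule compE)
  next
    fix f assume f: "f \<in> enveloping act"
    have "f \<circ> inv f = id" "inv f \<circ> f = id"
      using bij[OF f] by (metis bij_is_surj surj_iff) (metis bij[OF f] bij_is_inj inj_iff)
    then show "\<exists>g\<in>enveloping act. f \<circ> g = id \<and> g \<circ> f = id" using invE[OF f] by blast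
  qed
  show ?thesis
  proof (intro conjI[OF distal] conjI[OF grp] allI impI)
    fix F :: "'g filter" and g assume a: "g \<in> enveloping act \<and> (act \<longlongrightarrow> g) F"
    then have b: "bij g" using bij by blast
    have "g \<circ> inv g = id" "inv g \<circ> g = id"
      using b by (metis bij_is_surj surj_iff) (metis b bij_is_inj inj_iff)
    then show "inv g \<in> enveloping act \<and> g \<circ> inv g = id \<and> inv g \<circ> g = id \<and>
        ((\<lambda>t. act (- t)) \<longlongrightarrow> inv g) F"
      using invE a conv[OF b] by blast
  qed
qed
end
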